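(* Let $n\geq 1$ and $k\geq 2$ be integers, and let $w$ be a length-$n$ word over $\Sigma_k$. Then $\operatorname{rankU}_k(w)$ can be computed (from $w$ and $k$) in $O(kn^3)$ time using $O(n)$ space, under the unit-cost RAM model.
   Context: $\Sigma_k=\{1,2,\ldots,k\}$ with $1<2<\cdots<k$. Lexicographic order: for $x=x_1\cdots x_m$ and $y=y_1\cdots y_n$, $x<y$ if $x$ is a proper prefix of $y$, or if $x_i<y_i$ for the smallest $i$ with $x_i\neq y_i$. A border of a word $w$ is a word that is both a non-empty proper prefix and a non-empty proper suffix of $w$; $w$ is bordered if it has a border and unbordered otherwise. $\operatorname{rankU}_k(w)$ denotes the rank (position, starting from $1$) of $w$ in the lexicographic listing of all unbordered words of length $|w|$ over $\Sigma_k$; for an arbitrary word $w$ of length $n$ this is taken to mean $1$ plus the number of length-$n$ unbordered words over $\Sigma_k$ that are lexicographically smaller than $w$. Unit-cost RAM model: integer variables use constant space and integer arithmetic operations take constant time. *)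

theory Defs
  imports Main
begin

definition word_over :: "nat \<Rightarrow> nat list \<Rightarrow> bool" where
  "word_over k w \<longleftrightarrow> set w \<subseteq> {1..k}"

definition lex_less :: "nat list \<Rightarrow> nat list \<Rightarrow> bool" where
  "lex_less x y \<longleftrightarrow>
     (\<exists>v. v \<noteq> [] \<and> y = x @ v) \<or>
     (\<exists>i < min (length x) (length y). x ! i < y ! i \<and> (\<forall>j < i. x ! j = y ! j))"

definition is_border :: "nat list \<Rightarrow> nat list \<Rightarrow> bool" where
  "is_border u w \<longleftrightarrow> u \<noteq> [] \<and> length u < length w \<and>
     (\<exists>v. w = u @ v) \<and> (\<exists>v. w = v @ u)"

definition bordered :: "nat list \<Rightarrow> bool" where
  "bordered w \<longleftrightarrow> (\<exists>u. is_border u w)"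

definition unbordered :: "nat list \<Rightarrow> bool" where
  "unbordered w \<longleftrightarrow> \<not> bordered w"

definition rankU :: "nat \<Rightarrow> nat list \<Rightarrow> nat" where
  "rankU k w = 1 + card {u. length u = length w \<and> word_over k u \<and> unbordered u \<and> lex_less u w}"

text \<open>Every instruction costs one time unit; arithmetic on arbitrary integers is unit cost.\<close>

datatype instr =
    Const int int
  | Add int int int
  | Sub int int int
  | Mul int int int
  | Div int int int
  | Load int int
  | Store int int
  | Jz int nat
  | Jgtz int nat
  | Jmp nat

type_synonym config = "nat \<times> (int \<Rightarrow> int)"

definition halted :: "instr list \<Rightarrow> config \<Rightarrow> bool" where
  "halted P c \<longleftrightarrow> fst c \<ge> length P"

fun exec_instr :: "instr \<Rightarrow> config \<Rightarrow> config" where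
  "exec_instr (Const r v) (pc, m) = (Suc pc, m(r := v))"
| "exec_instr (Add r a b) (pc, m) = (Suc pc, m(r := m a + m b))"
| "exec_instr (Sub r a b) (pc, m) = (Suc pc, m(r := m a - m b))"
| "exec_instr (Mul r a b) (pc, m) = (Suc pc, m(r := m a * m b))"
| "exec_instr (Div r a b) (pc, m) = (Suc pc, m(r := m a div m b))"
| "exec_instr (Load r a) (pc, m) = (Suc pc, m(r := m (m a)))"
| "exec_instr (Store a b) (pc, m) = (Suc pc, m(m a := m b))"
| "exec_instr (Jz a l) (pc, m) = (if m a = 0 then l else Suc pc, m)"
| "exec_instr (Jgtz a l) (pc, m) = (if m a > 0 then l else Suc pc, m)"
| "exec_instr (Jmp l) (pc, m) = (l, m)"

fun cells_instr :: "instr \<Rightarrow> (int \<Rightarrow> int) \<Rightarrow> int set" where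
  "cells_instr (Const r v) m = {r}"
| "cells_instr (Add r a b) m = {r, a, b}"
| "cells_instr (Sub r a b) m = {r, a, b}"
| "cells_instr (Mul r a b) m = {r, a, b}"
| "cells_instr (Div r a b) m = {r, a, b}"
| "cells_instr (Load r a) m = {r, a, m a}"
| "cells_instr (Store a b) m = {a, b, m a}"
| "cells_instr (Jz a l) m = {a}"
| "cells_instr (Jgtz a l) m = {a}"
| "cells_instr (Jmp l) m = {}"

definition step :: "instr list \<Rightarrow> config \<Rightarrow> config" where
  "step P c = (if halted P c then c else exec_instr (P ! fst c) c)"

definition cells_step :: "instr list \<Rightarrow> config \<Rightarrow> int set" where
  "cells_step P c = (if halted P c then {} else cells_instr (P ! fst c) (snd c))"

definition steps :: "instr list \<Rightarrow> nat \<Rightarrow> config \<Rightarrow> config" where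
  "steps P t c = (step P ^^ t) c"

definition cells_used :: "instr list \<Rightarrow> nat \<Rightarrow> config \<Rightarrow> int set" where
  "cells_used P t c = (\<Union>i<t. cells_step P (steps P i c))"

text \<open>Input convention: M[0] = n, M[1] = k, M[2..n+1] = letters of w, all other cells 0;
  program counter 0.  Output convention: the result is in M[0] upon halting.\<close>
definition init_config :: "nat \<Rightarrow> nat list \<Rightarrow> config" where
  "init_config k w = (0, (\<lambda>a. if a = 0 then int (length w)
                              else if a = 1 then int k
                              else if 2 \<le> a \<and> a < int (length w) + 2 then int (w ! nat (a - 2))
                              else 0))"

end

theory Submission
  imports Defs
begin

definition Wd :: "nat \<Rightarrow> nat \<Rightarrow> nat list set" where
  "Wd k l = {x. length x = l \<and> word_over k x}"

lemma Wd_eq: "Wd k l = {xs. set xs \<subseteq> {1..k} \<and> length xs = l}"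
  by (auto simp: Wd_def word_over_def)

lemma finite_Wd[simp]: "finite (Wd k l)"
  unfolding Wd_eq by (rule finite_lists_length_eq) simp

lemma card_Wd: "card (Wd k l) = k ^ l"
  unfolding Wd_eq by (subst card_lists_length_eq) simp_all

definition Nv :: "nat \<Rightarrow> nat list \<Rightarrow> nat" where
  "Nv k x = foldl (\<lambda>a c. a * k + (c - 1)) 0 x"

lemma Nv_Nil[simp]: "Nv k [] = 0" by (simp add: Nv_def)

lemma Nv_snoc: "Nv k (x @ [c]) = Nv k x * k + (c - 1)"
  by (simp add: Nv_def)

lemma Nv_append: "Nv k (x @ y) = Nv k x * k ^ length y + Nv k y"
proof (induction y rule: rev_induct)
  case Nil then show ?case by simp
next
  case (snoc c y)
  have "Nv k (x @ y @ [c]) = Nv k (x @ y) * k + (c - 1)"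
    using Nv_snoc[of k "x @ y" c] by simp
  then show ?case using snoc by (simp add: Nv_snoc algebra_simps)
qed

lemma Nv_Cons: "Nv k (c # x) = (c - 1) * k ^ length x + Nv k x"
  using Nv_append[of k "[c]" x] by (simp add: Nv_def)

lemma word_over_Cons[simp]: "word_over k (c # x) \<longleftrightarrow> 1 \<le> c \<and> c \<le> k \<and> word_over k x"
  by (auto simp: word_over_def)

lemma word_over_Nil[simp]: "word_over k []"
  by (auto simp: word_over_def)

lemma word_over_append[simp]: "word_over k (x @ y) \<longleftrightarrow> word_over k x \<and> word_over k y"
  by (auto simp: word_over_def)

lemma word_over_take: "word_over k x \<Longrightarrow> word_over k (take i x)"
  by (auto simp: word_over_def dest: in_set_takeD)

lemma word_over_drop: "word_over k x \<Longrightarrow> word_over k (drop i x)"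
  by (auto simp: word_over_def dest: in_set_dropD)

lemma word_over_nth: "word_over k x \<Longrightarrow> i < length x \<Longrightarrow> 1 \<le> x ! i \<and> x ! i \<le> k"
  by (auto simp: word_over_def dest!: nth_mem)

lemma mix_less:
  fixes K p q a b :: nat
  assumes "a < K" "b < K" "p < q"
  shows "p * K + a < q * K + b"
proof -
  have "p * K + a < p * K + K" using assms by simp
  also have "\<dots> = (p + 1) * K" by simp
  also have "\<dots> \<le> q * K" using assms by (intro mult_right_mono) auto
  finally show ?thesis by simp
qed

lemma Nv_bound: "word_over k x \<Longrightarrow> Nv k x < k ^ length x"
proof (induction x)
  case Nil then show ?case by simp
next
  case (Cons c x)
  then have c: "1 \<le> c" "c \<le> k" and ih: "Nv k x < k ^ length x" by auto
  have "(c - 1) * k ^ length x + Nv k x < (c - 1) * k ^ length x + k ^ length x" using ih by simp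
  also have "\<dots> = c * k ^ length x" using c by (cases c) auto
  also have "\<dots> \<le> k * k ^ length x" using c by (intro mult_right_mono) auto
  finally show ?case by (simp add: Nv_Cons)
qed

lemma lex_same_len: "length x = length y \<Longrightarrow>
   lex_less x y \<longleftrightarrow> (\<exists>i<length x. x ! i < y ! i \<and> (\<forall>j<i. x ! j = y ! j))"
  by (auto simp: lex_less_def)

lemma lex_Nil[simp]: "\<not> lex_less [] []"
  by (simp add: lex_less_def)

lemma length_Cons_eq: "length x = length y \<Longrightarrow> length (a # x) = length (b # y)" by simp

lemma lex_Cons: "length x = length y \<Longrightarrow>
   lex_less (a # x) (b # y) \<longleftrightarrow> a < b \<or> (a = b \<and> lex_less x y)"
proof -
  assume len: "length x = length y"
  show ?thesis
  proof
    assume "lex_less (a # x) (b # y)"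
    then obtain i where i: "i < Suc (length x)" "(a # x) ! i < (b # y) ! i"
       "\<forall>j<i. (a # x) ! j = (b # y) ! j"
      using len by (auto simp: lex_same_len)
    show "a < b \<or> (a = b \<and> lex_less x y)"
    proof (cases i)
      case 0 then show ?thesis using i by simp
    next
      case (Suc i')
      have "a = b" using i(3) Suc by (metis nth_Cons_0 zero_less_Suc)
      moreover have "lex_less x y"
        unfolding lex_same_len[OF len]
      proof (intro exI conjI allI impI)
        show "i' < length x" using i Suc by simp
        show "x ! i' < y ! i'" using i Suc by simp
        fix j assume "j < i'"
        then show "x ! j = y ! j" using i(3) Suc by (metis Suc_mono nth_Cons_Suc)
      qed
      ultimately show ?thesis by simp
    qed
  next
    assume h: "a < b \<or> (a = b \<and> lex_less x y)"
    show "lex_less (a # x) (b # y)"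
    proof (cases "a < b")
      case True
      have "length (a#x) = length (b#y)" using len by simp
      then show ?thesis using True by (subst lex_same_len) (auto intro!: exI[of _ 0])
    next
      case False
      then have ab: "a = b" and l: "lex_less x y" using h by auto
      then obtain i where i: "i < length x" "x ! i < y ! i" "\<forall>j<i. x ! j = y ! j"
        using len by (auto simp: lex_same_len)
      show ?thesis
        unfolding lex_same_len[of "a#x" "b#y", OF length_Cons_eq[OF len]]
      proof (intro exI[of _ "Suc i"] conjI allI impI)
        show "Suc i < length (a # x)" using i len by simp
        show "(a # x) ! Suc i < (b # y) ! Suc i" using i by simp
        fix j assume "j < Suc i"
        then show "(a # x) ! j = (b # y) ! j" using i ab by (cases j) auto
      qed
    qed
  qed
qed

lemma lex_Nv: "length x = length y \<Longrightarrow> word_over k x \<Longrightarrow> word_over k y \<Longrightarrow>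
   lex_less x y \<longleftrightarrow> Nv k x < Nv k y"
proof (induction x y rule: list_induct2)
  case Nil then show ?case by simp
next
  case (Cons a x b y)
  let ?K = "k ^ length x"
  have bx: "Nv k x < ?K" "Nv k y < ?K" using Nv_bound[of k x] Nv_bound[of k y] Cons.hyps Cons.prems by auto
  have ab: "1 \<le> a" "1 \<le> b" using Cons by auto
  have "lex_less (a # x) (b # y) \<longleftrightarrow> a < b \<or> (a = b \<and> Nv k x < Nv k y)"
    using Cons by (simp add: lex_Cons)
  also have "\<dots> \<longleftrightarrow> (a - 1) * ?K + Nv k x < (b - 1) * ?K + Nv k y"
  proof -
    have "a < b \<Longrightarrow> (a - 1) * ?K + Nv k x < (b - 1) * ?K + Nv k y"
      using ab bx by (intro mix_less) auto
    moreover have "b < a \<Longrightarrow> (b - 1) * ?K + Nv k y < (a - 1) * ?K + Nv k x"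
      using ab bx by (intro mix_less) auto
    ultimately show ?thesis by (cases a b rule: linorder_cases) auto
  qed
  finally show ?case using Cons by (simp add: Nv_Cons)
qed

lemma Nv_inj: "length x = length y \<Longrightarrow> word_over k x \<Longrightarrow> word_over k y \<Longrightarrow>
   Nv k x = Nv k y \<Longrightarrow> x = y"
proof (induction x y rule: list_induct2)
  case Nil then show ?case by simp
next
  case (Cons a x b y)
  let ?K = "k ^ length x"
  have bx: "Nv k x < ?K" "Nv k y < ?K" using Nv_bound[of k x] Nv_bound[of k y] Cons.hyps Cons.prems by auto
  have ab: "1 \<le> a" "1 \<le> b" using Cons by auto
  have eq: "(a - 1) * ?K + Nv k x = (b - 1) * ?K + Nv k y"
    using Cons by (simp add: Nv_Cons)
  have "a = b"
  proof (rule ccontr)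
    assume "a \<noteq> b"
    then have "a - 1 < b - 1 \<or> b - 1 < a - 1" using ab by linarith
    then show False using mix_less[OF bx] mix_less[OF bx(2,1)] eq by force
  qed
  then show ?case using eq Cons by simp
qed

lemma lex_irrefl: "\<not> lex_less x x"
  by (auto simp: lex_less_def)

lemma card_lex_less: assumes "word_over k v"
  shows "card {x \<in> Wd k (length v). lex_less x v} = Nv k v"
proof -
  let ?l = "length v"
  have inj: "inj_on (Nv k) (Wd k ?l)"
    by (auto simp: inj_on_def Wd_def intro: Nv_inj)
  have sub: "Nv k ` Wd k ?l \<subseteq> {..<k ^ ?l}"
    using Nv_bound by (auto simp: Wd_def) (metis Nv_bound)
  have "card (Nv k ` Wd k ?l) = card {..<k ^ ?l}"
    using inj by (simp add: card_image card_Wd)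
  then have img: "Nv k ` Wd k ?l = {..<k ^ ?l}"
    using sub by (intro card_subset_eq) auto
  have set_eq: "{x \<in> Wd k ?l. lex_less x v} = {x \<in> Wd k ?l. Nv k x < Nv k v}"
    using assms by (auto simp: Wd_def lex_Nv)
  have "Nv k ` {x \<in> Wd k ?l. Nv k x < Nv k v} = {..<Nv k v}"
  proof
    show "Nv k ` {x \<in> Wd k ?l. Nv k x < Nv k v} \<subseteq> {..<Nv k v}" by auto
    show "{..<Nv k v} \<subseteq> Nv k ` {x \<in> Wd k ?l. Nv k x < Nv k v}"
    proof
      fix a assume a: "a \<in> {..<Nv k v}"
      then have "a < k ^ ?l" using Nv_bound[OF assms] by simp
      then obtain x where "x \<in> Wd k ?l" "a = Nv k x" using img by (metis imageE lessThan_iff)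
      then show "a \<in> Nv k ` {x \<in> Wd k ?l. Nv k x < Nv k v}" using a by auto
    qed
  qed
  moreover have "inj_on (Nv k) {x \<in> Wd k ?l. Nv k x < Nv k v}"
    using inj by (rule inj_on_subset) auto
  ultimately show ?thesis unfolding set_eq
    by (metis card_image card_lessThan)
qed

lemma lex_append: "length u = length v \<Longrightarrow> length y = length z \<Longrightarrow>
  lex_less (u @ y) (v @ z) \<longleftrightarrow> lex_less u v \<or> (u = v \<and> lex_less y z)"
  by (induction u v rule: list_induct2) (auto simp: lex_Cons)



lemma bordered_iff: "bordered w \<longleftrightarrow> (\<exists>j. 0 < j \<and> j < length w \<and> take j w = drop (length w - j) w)"
proof
  assume "bordered w"
  then obtain u where "is_border u w" by (auto simp: bordered_def)
  then obtain v1 v2 where u: "u \<noteq> []" "length u < length w" "w = u @ v1" "w = v2 @ u"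
    unfolding is_border_def by blast
  have "take (length u) w = u" using u(3) by simp
  moreover have "drop (length w - length u) w = u" using u(4) by simp
  ultimately
  show "\<exists>j. 0 < j \<and> j < length w \<and> take j w = drop (length w - j) w"
    using u by (intro exI[of _ "length u"]) auto
next
  assume "\<exists>j. 0 < j \<and> j < length w \<and> take j w = drop (length w - j) w"
  then obtain j where j: "0 < j" "j < length w" "take j w = drop (length w - j) w" by blast
  have "is_border (take j w) w"
    unfolding is_border_def
  proof (intro conjI)
    show "take j w \<noteq> []" using j by simp
    show "length (take j w) < length w" using j by simp
    show "\<exists>v. w = take j w @ v" by (metis append_take_drop_id)
    show "\<exists>v. w = v @ take j w" using j(3) by (metis append_take_drop_id)
  qed
  then show "bordered w" by (auto simp: bordered_def)
qed

lemma take_drop_nth: "take j w = drop (length w - j) w \<Longrightarrow> j \<le> length w \<Longrightarrow> i < j \<Longrightarrow>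
   w ! i = w ! (length w - j + i)"
  by (metis length_take min.absorb2 nth_drop nth_take diff_le_self)

lemma bordered_char: "bordered w \<longleftrightarrow>
  (\<exists>j. 0 < j \<and> 2 * j \<le> length w \<and> unbordered (take j w) \<and> take j w = drop (length w - j) w)"
proof
  let ?L = "length w"
  let ?P = "\<lambda>j. 0 < j \<and> j < ?L \<and> take j w = drop (?L - j) w"
  assume "bordered w"
  then have "\<exists>j. ?P j" by (simp add: bordered_iff)
  then obtain j where Pj: "?P j" and min: "\<And>i. i < j \<Longrightarrow> \<not> ?P i"
    using exists_least_iff[of ?P] by blast
  have ub: "unbordered (take j w)"
  proof (rule ccontr)
    assume "\<not> unbordered (take j w)"
    then obtain b where b: "0 < b" "b < j" "take b (take j w) = drop (j - b) (take j w)"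
      using Pj by (auto simp: unbordered_def bordered_iff min_absorb2)
    have "take b w = drop (?L - b) w"
    proof -
      have "take b w = take b (take j w)" using b by simp
      also have "\<dots> = drop (j - b) (take j w)" by (rule b(3))
      also have "\<dots> = drop (j - b) (drop (?L - j) w)" using Pj by simp
      also have "\<dots> = drop (?L - b) w" using b Pj by simp
      finally show ?thesis .
    qed
    then show False using min[of b] b Pj by simp
  qed
  have "2 * j \<le> ?L"
  proof (rule ccontr)
    assume "\<not> 2 * j \<le> ?L"
    define b where "b = 2 * j - ?L"
    have b: "0 < b" "b < j" using Pj \<open>\<not> 2 * j \<le> ?L\<close> by (auto simp: b_def)
    have per: "\<And>i. i < j \<Longrightarrow> w ! i = w ! (?L - j + i)"
      using take_drop_nth[of j w] Pj by simp
    have "take b w = drop (?L - b) w"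
    proof (rule nth_equalityI)
      show "length (take b w) = length (drop (?L - b) w)" using b Pj by simp
      fix i assume "i < length (take b w)"
      then have i: "i < b" by simp
      have "drop (?L - b) w ! i = w ! (?L - b + i)" using b Pj i by simp
      also have "?L - b + i = ?L - j + (j - b + i)" using b Pj i by (simp add: b_def)
      also have "w ! (?L - j + (j - b + i)) = w ! (j - b + i)" using per[of "j - b + i"] b i by simp
      also have "j - b + i = ?L - j + i" using b Pj by (simp add: b_def)
      also have "w ! (?L - j + i) = w ! i" using per[of i] b i by simp
      finally show "take b w ! i = drop (?L - b) w ! i" using i b Pj by simp
    qed
    then show False using min[of b] b Pj by simp
  qed
  then show "\<exists>j. 0 < j \<and> 2 * j \<le> length w \<and> unbordered (take j w) \<and> take j w = drop (length w - j) w"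
    using Pj ub by blast
next
  assume "\<exists>j. 0 < j \<and> 2 * j \<le> length w \<and> unbordered (take j w) \<and> take j w = drop (length w - j) w"
  then show "bordered w" unfolding bordered_iff by (metis less_le_trans mult_2 less_add_same_cancel1)
qed

lemma ub_unique_aux:
  assumes "0 < i" "i < j" "j \<le> length w"
    and "take i w = drop (length w - i) w"
    and "unbordered (take j w)" "take j w = drop (length w - j) w"
  shows False
proof -
  have "take i (take j w) = drop (j - i) (take j w)"
  proof -
    have "take i (take j w) = take i w" using assms(2) by (simp add: min_def)
    also have "\<dots> = drop (length w - i) w" by (rule assms(4))
    also have "\<dots> = drop (j - i) (drop (length w - j) w)" using assms by simp
    also have "\<dots> = drop (j - i) (take j w)" using assms(6) by simp
    finally show ?thesis .
  qed
  then have "bordered (take j w)" unfolding bordered_iff using assms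
    by (intro exI[of _ i]) (simp add: min_absorb2)
  then show False using assms(5) by (simp add: unbordered_def)
qed

lemma ub_unique:
  assumes "0 < i" "2 * i \<le> length w" "unbordered (take i w)" "take i w = drop (length w - i) w"
    and "0 < j" "2 * j \<le> length w" "unbordered (take j w)" "take j w = drop (length w - j) w"
  shows "i = j"
  using ub_unique_aux[of i j w] ub_unique_aux[of j i w] assms
  by (cases i j rule: linorder_cases) auto



definition Unb :: "nat \<Rightarrow> nat \<Rightarrow> nat list set" where
  "Unb k l = {x \<in> Wd k l. unbordered x}"

definition Rc :: "nat \<Rightarrow> nat list \<Rightarrow> nat" where
  "Rc k v = card {u \<in> Unb k (length v). lex_less u v}"

definition Tm :: "nat \<Rightarrow> nat list \<Rightarrow> nat \<Rightarrow> nat" where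
  "Tm k v j = Rc k (take j v) * k ^ (length v - 2 * j) +
     (if unbordered (take j v) then Nv k (take (length v - 2 * j) (drop j v)) +
        (if lex_less (take j v) (drop (length v - j) v) then 1 else 0) else 0)"

lemma finite_Unb[simp]: "finite (Unb k l)"
  unfolding Unb_def by simp

lemma split3: "2 * j \<le> length u \<Longrightarrow>
   u = take j u @ take (length u - 2 * j) (drop j u) @ drop (length u - j) u"
proof -
  assume a: "2 * j \<le> length u"
  have "take (length u - 2 * j) (drop j u) @ drop (length u - j) u = drop j u"
  proof -
    have "drop (length u - j) u = drop (length u - 2 * j) (drop j u)" using a by simp
    then show ?thesis by (metis append_take_drop_id)
  qed
  then show ?thesis by simp
qed

lemma card_Bj:
  assumes v: "word_over k v" and j: "0 < j" "2 * j \<le> length v"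
  shows "card {u \<in> Wd k (length v). lex_less u v \<and> unbordered (take j u) \<and>
              take j u = drop (length v - j) u} = Tm k v j"
proof -
  let ?L = "length v"
  let ?m = "?L - 2 * j"
  define v1 where "v1 = take j v"
  define v2 where "v2 = take ?m (drop j v)"
  define v3 where "v3 = drop (?L - j) v"
  have vsplit: "v = v1 @ v2 @ v3" unfolding v1_def v2_def v3_def using split3[OF j(2)] .
  have len: "length v1 = j" "length v2 = ?m" "length v3 = j"
    using j by (auto simp: v1_def v2_def v3_def)
  have wv: "word_over k v1" "word_over k v2" "word_over k v3"
    using v vsplit by (metis word_over_append)+
  define P where "P = {(a, x). a \<in> Unb k j \<and> x \<in> Wd k ?m \<and> lex_less (a @ x @ a) v}"
  define f where "f = (\<lambda>(a::nat list, x::nat list). a @ x @ a)"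
  have lexsplit: "lex_less (a @ x @ a) v \<longleftrightarrow>
      lex_less a v1 \<or> (a = v1 \<and> (lex_less x v2 \<or> (x = v2 \<and> lex_less a v3)))"
    if "length a = j" "length x = ?m" for a x
    using that len by (subst vsplit) (simp add: lex_append)
  have inj: "inj_on f P"
    by (auto simp: inj_on_def f_def P_def Unb_def Wd_def)
  have img: "f ` P = {u \<in> Wd k ?L. lex_less u v \<and> unbordered (take j u) \<and>
              take j u = drop (?L - j) u}"
  proof
    show "f ` P \<subseteq> {u \<in> Wd k ?L. lex_less u v \<and> unbordered (take j u) \<and>
              take j u = drop (?L - j) u}"
      using j by (auto simp: f_def P_def Unb_def Wd_def)
    show "{u \<in> Wd k ?L. lex_less u v \<and> unbordered (take j u) \<and>
              take j u = drop (?L - j) u} \<subseteq> f ` P"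
    proof
      fix u assume u: "u \<in> {u \<in> Wd k ?L. lex_less u v \<and> unbordered (take j u) \<and>
              take j u = drop (?L - j) u}"
      then have lu: "length u = ?L" and wu: "word_over k u" by (auto simp: Wd_def)
      have ueq: "u = take j u @ take ?m (drop j u) @ take j u"
        using split3[of j u] j lu u by simp
      have "(take j u, take ?m (drop j u)) \<in> P"
        unfolding P_def Unb_def Wd_def using u lu wu j ueq
        by (auto simp: word_over_take word_over_drop)
      then show "u \<in> f ` P" using ueq unfolding f_def by (metis (no_types, lifting) case_prod_conv image_eqI)
    qed
  qed
  define P1 where "P1 = {a \<in> Unb k j. lex_less a v1} \<times> Wd k ?m"
  define P2 where "P2 = (if unbordered v1 then (\<lambda>x. (v1, x)) ` {x \<in> Wd k ?m. lex_less x v2} else {})"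
  define P3 where "P3 = (if unbordered v1 \<and> lex_less v1 v3 then {(v1, v2)} else {})"
  have Peq: "P = P1 \<union> P2 \<union> P3"
  proof -
    have "P = {(a, x). a \<in> Unb k j \<and> x \<in> Wd k ?m \<and>
       (lex_less a v1 \<or> (a = v1 \<and> (lex_less x v2 \<or> (x = v2 \<and> lex_less a v3))))}"
      unfolding P_def using lexsplit by (auto simp: Unb_def Wd_def)
    also have "\<dots> = P1 \<union> P2 \<union> P3"
      using len wv by (auto simp: P1_def P2_def P3_def Unb_def Wd_def)
    finally show ?thesis .
  qed
  have fin: "finite P1" "finite P2" "finite P3" by (auto simp: P1_def P2_def P3_def)
  have d12: "P1 \<inter> P2 = {}" and d3: "(P1 \<union> P2) \<inter> P3 = {}"
    by (auto simp: P1_def P2_def P3_def lex_irrefl)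
  have c1: "card P1 = Rc k v1 * k ^ ?m"
    by (simp add: P1_def Rc_def len card_cartesian_product card_Wd)
  have c2: "card P2 = (if unbordered v1 then Nv k v2 else 0)"
  proof -
    have "card ((\<lambda>x. (v1, x)) ` {x \<in> Wd k ?m. lex_less x v2}) = card {x \<in> Wd k ?m. lex_less x v2}"
      by (rule card_image) (auto simp: inj_on_def)
    also have "\<dots> = Nv k v2" using card_lex_less[OF wv(2)] len by simp
    finally show ?thesis by (simp add: P2_def)
  qed
  have c3: "card P3 = (if unbordered v1 \<and> lex_less v1 v3 then 1 else 0)"
    by (simp add: P3_def)
  have "card (f ` P) = card P" using inj by (rule card_image)
  also have "\<dots> = card P1 + card P2 + card P3"
    unfolding Peq using fin d12 d3 by (simp add: card_Un_disjoint)
  also have "\<dots> = Tm k v j"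
    unfolding c1 c2 c3 Tm_def v1_def v2_def v3_def by simp
  finally show ?thesis using img by simp
qed

lemma count_main:
  assumes v: "word_over k v"
  shows "Nv k v = Rc k v + (\<Sum>j\<in>{1..length v div 2}. Tm k v j)"
proof -
  let ?L = "length v"
  let ?J = "{1..?L div 2}"
  define Less where "Less = {u \<in> Wd k ?L. lex_less u v}"
  define B where "B = (\<lambda>j. {u \<in> Wd k ?L. lex_less u v \<and> unbordered (take j u) \<and>
              take j u = drop (?L - j) u})"
  define U0 where "U0 = {u \<in> Unb k ?L. lex_less u v}"
  have cl: "card Less = Nv k v" unfolding Less_def by (rule card_lex_less[OF v])
  have Leq: "Less = U0 \<union> (\<Union>j\<in>?J. B j)"
  proof
    show "Less \<subseteq> U0 \<union> (\<Union>j\<in>?J. B j)"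
    proof
      fix u assume u: "u \<in> Less"
      show "u \<in> U0 \<union> (\<Union>j\<in>?J. B j)"
      proof (cases "unbordered u")
        case True then show ?thesis using u by (auto simp: U0_def Less_def Unb_def)
      next
        case False
        then obtain j where "0 < j" "2 * j \<le> length u" "unbordered (take j u)"
            "take j u = drop (length u - j) u"
          using bordered_char[of u] by (auto simp: unbordered_def)
        moreover have "length u = ?L" using u by (auto simp: Less_def Wd_def)
        ultimately show ?thesis using u
          by (auto simp: B_def Less_def intro!: bexI[of _ j])
      qed
    qed
    show "U0 \<union> (\<Union>j\<in>?J. B j) \<subseteq> Less"
      by (auto simp: U0_def B_def Less_def Unb_def)
  qed
  have disj0: "U0 \<inter> (\<Union>j\<in>?J. B j) = {}"
  proof -
    have "bordered u" if "u \<in> B j" "j \<in> ?J" for u j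
      using that unfolding bordered_char B_def Wd_def
      by (intro exI[of _ j]) auto
    then show ?thesis by (auto simp: U0_def Unb_def unbordered_def)
  qed
  have disjB: "B i \<inter> B j = {}" if "i \<in> ?J" "j \<in> ?J" "i \<noteq> j" for i j
  proof -
    have False if "u \<in> B i" "u \<in> B j" for u
    proof -
      have l: "length u = ?L" using that by (simp add: B_def Wd_def)
      have ij: "0 < i" "2 * i \<le> length u" "0 < j" "2 * j \<le> length u"
        using \<open>i \<in> ?J\<close> \<open>j \<in> ?J\<close> l by auto
      have "unbordered (take i u)" "take i u = drop (length u - i) u"
           "unbordered (take j u)" "take j u = drop (length u - j) u"
        using that l unfolding B_def mem_Collect_eq by metis+
      then show False using ub_unique[OF ij(1,2) _ _ ij(3,4)] \<open>i \<noteq> j\<close> by blast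
    qed
    then show ?thesis by blast
  qed
  have finB: "finite (B j)" for j by (simp add: B_def)
  have "card Less = card U0 + card (\<Union>j\<in>?J. B j)"
    unfolding Leq using disj0 finB by (intro card_Un_disjoint) (auto simp: U0_def)
  also have "card (\<Union>j\<in>?J. B j) = (\<Sum>j\<in>?J. card (B j))"
    using disjB finB by (intro card_UN_disjoint) auto
  also have "\<dots> = (\<Sum>j\<in>?J. Tm k v j)"
    by (rule sum.cong) (auto simp: B_def intro!: card_Bj[OF v])
  finally show ?thesis using cl by (simp add: U0_def Rc_def)
qed

lemma count_unb:
  "(\<Sum>j\<in>{1..length v div 2}. (if unbordered (take j v) \<and> take j v = drop (length v - j) v then 1 else 0::int))
    = (if unbordered v then 0 else 1)"
proof (cases "unbordered v")
  case True
  have "\<not> (unbordered (take j v) \<and> take j v = drop (length v - j) v)" if "j \<in> {1..length v div 2}" for j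
  proof
    assume h: "unbordered (take j v) \<and> take j v = drop (length v - j) v"
    have "0 < j" "2 * j \<le> length v" using that by auto
    then have "bordered v" using h unfolding bordered_char by blast
    then show False using True by (simp add: unbordered_def)
  qed
  note nn = this
  have "(\<Sum>j\<in>{1..length v div 2}. (if unbordered (take j v) \<and> take j v = drop (length v - j) v then 1 else 0::int)) = 0"
  proof (intro sum.neutral ballI)
    fix j assume "j \<in> {1..length v div 2}"
    then have "\<not> (unbordered (take j v) \<and> take j v = drop (length v - j) v)" by (rule nn)
    then show "(if unbordered (take j v) \<and> take j v = drop (length v - j) v then 1 else 0::int) = 0"
      by (simp only: if_False)
  qed
  then show ?thesis using True by simp
next
  case False
  then obtain j0 where j0: "0 < j0" "2 * j0 \<le> length v" "unbordered (take j0 v)"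
            "take j0 v = drop (length v - j0) v"
    using bordered_char[of v] by (auto simp: unbordered_def)
  have "(\<Sum>j\<in>{1..length v div 2}. (if unbordered (take j v) \<and> take j v = drop (length v - j) v then 1 else 0::int))
     = (\<Sum>j\<in>{1..length v div 2}. (if j = j0 then 1 else 0))"
  proof (rule sum.cong)
    fix j assume jJ: "j \<in> {1..length v div 2}"
    have "0 < j" "2 * j \<le> length v" using jJ by auto
    then have "(unbordered (take j v) \<and> take j v = drop (length v - j) v) \<longleftrightarrow> j = j0"
      using ub_unique[of j v j0] j0 by blast
    then show "(if unbordered (take j v) \<and> take j v = drop (length v - j) v then 1 else 0::int)
       = (if j = j0 then 1 else 0)" by simp
  qed simp
  also have "\<dots> = 1" using j0 by simp
  finally show ?thesis using False by simp
qed



lemma steps_Suc: "steps P (Suc t) c = steps P t (step P c)"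
  by (simp add: steps_def funpow_Suc_right del: funpow.simps)

lemma steps_0[simp]: "steps P 0 c = c" by (simp add: steps_def)

lemma steps_add: "steps P (a + b) c = steps P b (steps P a c)"
  by (simp add: steps_def add.commute[of a b] funpow_add)

lemma cells_used_0[simp]: "cells_used P 0 c = {}" by (simp add: cells_used_def)

lemma cells_used_Suc: "cells_used P (Suc t) c = cells_step P c \<union> cells_used P t (step P c)"
proof -
  have "cells_used P (Suc t) c = (\<Union>i\<in>insert 0 (Suc ` {..<t}). cells_step P (steps P i c))"
    unfolding cells_used_def lessThan_Suc_eq_insert_0 ..
  also have "\<dots> = cells_step P c \<union> (\<Union>i<t. cells_step P (steps P (Suc i) c))" by simp
  also have "\<dots> = cells_step P c \<union> cells_used P t (step P c)"
    by (simp add: cells_used_def steps_Suc)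
  finally show ?thesis .
qed

lemma cells_used_add: "cells_used P (a + b) c = cells_used P a c \<union> cells_used P b (steps P a c)"
proof (induction a arbitrary: c)
  case 0 then show ?case by simp
next
  case (Suc a)
  show ?case using Suc[of "step P c"] by (simp add: cells_used_Suc steps_Suc Un_assoc)
qed

definition prog :: "instr list" where
  "prog = [
    Const (-1) 1,
    Const (-2) 2,
    Const (-18) (-100),
    Const (-3) 1,
    Const (-11) 0,
    Sub (-12) (-3) 0,
    Jgtz (-12) 78,
    Add (-13) (-3) (-1),
    Load (-16) (-13),
    Mul (-11) (-11) 1,
    Add (-11) (-11) (-16),
    Sub (-11) (-11) (-1),
    Const (-9) 0,
    Const (-10) 0,
    Const (-4) 1,
    Mul (-12) (-2) (-4),
    Sub (-12) (-12) (-3),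
    Jgtz (-12) 69,
    Mul (-12) (-2) (-4),
    Sub (-13) (-18) (-12),
    Load (-15) (-13),
    Sub (-13) (-13) (-1),
    Load (-14) (-13),
    Const (-6) 0,
    Const (-7) 0,
    Const (-5) 0,
    Sub (-12) (-5) (-4),
    Add (-12) (-12) (-1),
    Jgtz (-12) 43,
    Add (-13) (-5) (-2),
    Load (-16) (-13),
    Mul (-6) (-6) 1,
    Add (-6) (-6) (-16),
    Sub (-6) (-6) (-1),
    Sub (-13) (-3) (-4),
    Add (-13) (-13) (-5),
    Add (-13) (-13) (-2),
    Load (-16) (-13),
    Mul (-7) (-7) 1,
    Add (-7) (-7) (-16),
    Sub (-7) (-7) (-1),
    Add (-5) (-5) (-1),
    Jmp 26,
    Const (-8) 0,
    Add (-8) (-8) (-15),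
    Const (-5) 0,
    Add (-5) (-5) (-4),
    Add (-12) (-5) (-4),
    Sub (-12) (-12) (-3),
    Add (-12) (-12) (-1),
    Jgtz (-12) 59,
    Add (-13) (-5) (-2),
    Load (-16) (-13),
    Sub (-16) (-16) (-1),
    Mul (-16) (-16) (-14),
    Mul (-8) (-8) 1,
    Add (-8) (-8) (-16),
    Add (-5) (-5) (-1),
    Jmp 47,
    Sub (-12) (-7) (-6),
    Jgtz (-12) 62,
    Jmp 63,
    Add (-8) (-8) (-14),
    Jz (-12) 65,
    Jmp 66,
    Add (-10) (-10) (-14),
    Add (-9) (-9) (-8),
    Add (-4) (-4) (-1),
    Jmp 15,
    Mul (-12) (-2) (-3),
    Sub (-13) (-18) (-12),
    Sub (-17) (-11) (-9),
    Store (-13) (-17),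
    Sub (-13) (-13) (-1),
    Sub (-17) (-1) (-10),
    Store (-13) (-17),
    Add (-3) (-3) (-1),
    Jmp 5,
    Mul (-12) (-2) 0,
    Sub (-13) (-18) (-12),
    Load 0 (-13),
    Add 0 0 (-1)]"

lemma prog_len[simp]: "length prog = 82" by (simp add: prog_def)

lemma prog_0[simp]: "prog ! 0 = Const (-1) 1" by (simp add: prog_def)
lemma prog_1[simp]: "prog ! 1 = Const (-2) 2" by (simp add: prog_def)
lemma prog_2[simp]: "prog ! 2 = Const (-18) (-100)" by (simp add: prog_def)
lemma prog_3[simp]: "prog ! 3 = Const (-3) 1" by (simp add: prog_def)
lemma prog_4[simp]: "prog ! 4 = Const (-11) 0" by (simp add: prog_def)
lemma prog_5[simp]: "prog ! 5 = Sub (-12) (-3) 0" by (simp add: prog_def)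
lemma prog_6[simp]: "prog ! 6 = Jgtz (-12) 78" by (simp add: prog_def)
lemma prog_7[simp]: "prog ! 7 = Add (-13) (-3) (-1)" by (simp add: prog_def)
lemma prog_8[simp]: "prog ! 8 = Load (-16) (-13)" by (simp add: prog_def)
lemma prog_9[simp]: "prog ! 9 = Mul (-11) (-11) 1" by (simp add: prog_def)
lemma prog_10[simp]: "prog ! 10 = Add (-11) (-11) (-16)" by (simp add: prog_def)
lemma prog_11[simp]: "prog ! 11 = Sub (-11) (-11) (-1)" by (simp add: prog_def)
lemma prog_12[simp]: "prog ! 12 = Const (-9) 0" by (simp add: prog_def)
lemma prog_13[simp]: "prog ! 13 = Const (-10) 0" by (simp add: prog_def)
lemma prog_14[simp]: "prog ! 14 = Const (-4) 1" by (simp add: prog_def)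
lemma prog_15[simp]: "prog ! 15 = Mul (-12) (-2) (-4)" by (simp add: prog_def)
lemma prog_16[simp]: "prog ! 16 = Sub (-12) (-12) (-3)" by (simp add: prog_def)
lemma prog_17[simp]: "prog ! 17 = Jgtz (-12) 69" by (simp add: prog_def)
lemma prog_18[simp]: "prog ! 18 = Mul (-12) (-2) (-4)" by (simp add: prog_def)
lemma prog_19[simp]: "prog ! 19 = Sub (-13) (-18) (-12)" by (simp add: prog_def)
lemma prog_20[simp]: "prog ! 20 = Load (-15) (-13)" by (simp add: prog_def)
lemma prog_21[simp]: "prog ! 21 = Sub (-13) (-13) (-1)" by (simp add: prog_def)
lemma prog_22[simp]: "prog ! 22 = Load (-14) (-13)" by (simp add: prog_def)
lemma prog_23[simp]: "prog ! 23 = Const (-6) 0" by (simp add: prog_def)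
lemma prog_24[simp]: "prog ! 24 = Const (-7) 0" by (simp add: prog_def)
lemma prog_25[simp]: "prog ! 25 = Const (-5) 0" by (simp add: prog_def)
lemma prog_26[simp]: "prog ! 26 = Sub (-12) (-5) (-4)" by (simp add: prog_def)
lemma prog_27[simp]: "prog ! 27 = Add (-12) (-12) (-1)" by (simp add: prog_def)
lemma prog_28[simp]: "prog ! 28 = Jgtz (-12) 43" by (simp add: prog_def)
lemma prog_29[simp]: "prog ! 29 = Add (-13) (-5) (-2)" by (simp add: prog_def)
lemma prog_30[simp]: "prog ! 30 = Load (-16) (-13)" by (simp add: prog_def)
lemma prog_31[simp]: "prog ! 31 = Mul (-6) (-6) 1" by (simp add: prog_def)
lemma prog_32[simp]: "prog ! 32 = Add (-6) (-6) (-16)" by (simp add: prog_def)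
lemma prog_33[simp]: "prog ! 33 = Sub (-6) (-6) (-1)" by (simp add: prog_def)
lemma prog_34[simp]: "prog ! 34 = Sub (-13) (-3) (-4)" by (simp add: prog_def)
lemma prog_35[simp]: "prog ! 35 = Add (-13) (-13) (-5)" by (simp add: prog_def)
lemma prog_36[simp]: "prog ! 36 = Add (-13) (-13) (-2)" by (simp add: prog_def)
lemma prog_37[simp]: "prog ! 37 = Load (-16) (-13)" by (simp add: prog_def)
lemma prog_38[simp]: "prog ! 38 = Mul (-7) (-7) 1" by (simp add: prog_def)
lemma prog_39[simp]: "prog ! 39 = Add (-7) (-7) (-16)" by (simp add: prog_def)
lemma prog_40[simp]: "prog ! 40 = Sub (-7) (-7) (-1)" by (simp add: prog_def)
lemma prog_41[simp]: "prog ! 41 = Add (-5) (-5) (-1)" by (simp add: prog_def)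
lemma prog_42[simp]: "prog ! 42 = Jmp 26" by (simp add: prog_def)
lemma prog_43[simp]: "prog ! 43 = Const (-8) 0" by (simp add: prog_def)
lemma prog_44[simp]: "prog ! 44 = Add (-8) (-8) (-15)" by (simp add: prog_def)
lemma prog_45[simp]: "prog ! 45 = Const (-5) 0" by (simp add: prog_def)
lemma prog_46[simp]: "prog ! 46 = Add (-5) (-5) (-4)" by (simp add: prog_def)
lemma prog_47[simp]: "prog ! 47 = Add (-12) (-5) (-4)" by (simp add: prog_def)
lemma prog_48[simp]: "prog ! 48 = Sub (-12) (-12) (-3)" by (simp add: prog_def)
lemma prog_49[simp]: "prog ! 49 = Add (-12) (-12) (-1)" by (simp add: prog_def)
lemma prog_50[simp]: "prog ! 50 = Jgtz (-12) 59" by (simp add: prog_def)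
lemma prog_51[simp]: "prog ! 51 = Add (-13) (-5) (-2)" by (simp add: prog_def)
lemma prog_52[simp]: "prog ! 52 = Load (-16) (-13)" by (simp add: prog_def)
lemma prog_53[simp]: "prog ! 53 = Sub (-16) (-16) (-1)" by (simp add: prog_def)
lemma prog_54[simp]: "prog ! 54 = Mul (-16) (-16) (-14)" by (simp add: prog_def)
lemma prog_55[simp]: "prog ! 55 = Mul (-8) (-8) 1" by (simp add: prog_def)
lemma prog_56[simp]: "prog ! 56 = Add (-8) (-8) (-16)" by (simp add: prog_def)
lemma prog_57[simp]: "prog ! 57 = Add (-5) (-5) (-1)" by (simp add: prog_def)
lemma prog_58[simp]: "prog ! 58 = Jmp 47" by (simp add: prog_def)
lemma prog_59[simp]: "prog ! 59 = Sub (-12) (-7) (-6)" by (simp add: prog_def)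
lemma prog_60[simp]: "prog ! 60 = Jgtz (-12) 62" by (simp add: prog_def)
lemma prog_61[simp]: "prog ! 61 = Jmp 63" by (simp add: prog_def)
lemma prog_62[simp]: "prog ! 62 = Add (-8) (-8) (-14)" by (simp add: prog_def)
lemma prog_63[simp]: "prog ! 63 = Jz (-12) 65" by (simp add: prog_def)
lemma prog_64[simp]: "prog ! 64 = Jmp 66" by (simp add: prog_def)
lemma prog_65[simp]: "prog ! 65 = Add (-10) (-10) (-14)" by (simp add: prog_def)
lemma prog_66[simp]: "prog ! 66 = Add (-9) (-9) (-8)" by (simp add: prog_def)
lemma prog_67[simp]: "prog ! 67 = Add (-4) (-4) (-1)" by (simp add: prog_def)
lemma prog_68[simp]: "prog ! 68 = Jmp 15" by (simp add: prog_def)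
lemma prog_69[simp]: "prog ! 69 = Mul (-12) (-2) (-3)" by (simp add: prog_def)
lemma prog_70[simp]: "prog ! 70 = Sub (-13) (-18) (-12)" by (simp add: prog_def)
lemma prog_71[simp]: "prog ! 71 = Sub (-17) (-11) (-9)" by (simp add: prog_def)
lemma prog_72[simp]: "prog ! 72 = Store (-13) (-17)" by (simp add: prog_def)
lemma prog_73[simp]: "prog ! 73 = Sub (-13) (-13) (-1)" by (simp add: prog_def)
lemma prog_74[simp]: "prog ! 74 = Sub (-17) (-1) (-10)" by (simp add: prog_def)
lemma prog_75[simp]: "prog ! 75 = Store (-13) (-17)" by (simp add: prog_def)
lemma prog_76[simp]: "prog ! 76 = Add (-3) (-3) (-1)" by (simp add: prog_def)
lemma prog_77[simp]: "prog ! 77 = Jmp 5" by (simp add: prog_def)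
lemma prog_78[simp]: "prog ! 78 = Mul (-12) (-2) 0" by (simp add: prog_def)
lemma prog_79[simp]: "prog ! 79 = Sub (-13) (-18) (-12)" by (simp add: prog_def)
lemma prog_80[simp]: "prog ! 80 = Load 0 (-13)" by (simp add: prog_def)
lemma prog_81[simp]: "prog ! 81 = Add 0 0 (-1)" by (simp add: prog_def)

definition runs :: "int set \<Rightarrow> config \<Rightarrow> nat \<Rightarrow> (config \<Rightarrow> bool) \<Rightarrow> bool" where
  "runs S c B Q \<longleftrightarrow> (\<exists>t\<le>B. Q (steps prog t c) \<and> cells_used prog t c \<subseteq> S)"

lemma runs_done: "Q c \<Longrightarrow> runs S c B Q"
  unfolding runs_def by (intro exI[of _ 0]) auto

lemma runs_step:
  assumes "0 < B" "pc < length prog" "cells_instr (prog ! pc) m \<subseteq> S"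
    "runs S (exec_instr (prog ! pc) (pc, m)) (B - 1) Q"
  shows "runs S (pc, m) B Q"
proof -
  obtain t where t: "t \<le> B - 1" "Q (steps prog t (exec_instr (prog ! pc) (pc, m)))"
    "cells_used prog t (exec_instr (prog ! pc) (pc, m)) \<subseteq> S"
    using assms(4) unfolding runs_def by blast
  have st: "step prog (pc, m) = exec_instr (prog ! pc) (pc, m)"
    using assms(2) by (simp add: step_def halted_def)
  have cs: "cells_step prog (pc, m) = cells_instr (prog ! pc) m"
    using assms(2) by (simp add: cells_step_def halted_def)
  show ?thesis unfolding runs_def
    using t assms(1,3) st cs by (intro exI[of _ "Suc t"]) (auto simp: steps_Suc cells_used_Suc)
qed

lemma runs_seq:
  assumes "runs S c B1 Q1" "\<And>c'. Q1 c' \<Longrightarrow> runs S c' B2 Q2"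
  shows "runs S c (B1 + B2) Q2"
proof -
  obtain t1 where t1: "t1 \<le> B1" "Q1 (steps prog t1 c)" "cells_used prog t1 c \<subseteq> S"
    using assms(1) unfolding runs_def by blast
  obtain t2 where t2: "t2 \<le> B2" "Q2 (steps prog t2 (steps prog t1 c))"
    "cells_used prog t2 (steps prog t1 c) \<subseteq> S"
    using assms(2)[OF t1(2)] unfolding runs_def by blast
  show ?thesis unfolding runs_def
    using t1 t2 by (intro exI[of _ "t1 + t2"]) (auto simp: steps_add cells_used_add)
qed

lemma runs_mono: "runs S c B Q \<Longrightarrow> B \<le> B' \<Longrightarrow> (\<And>c. Q c \<Longrightarrow> Q' c) \<Longrightarrow> runs S c B' Q'"
  unfolding runs_def by (meson order_trans)

lemma runs_loop:
  assumes "\<And>i c. I (Suc i) c \<Longrightarrow> runs S c b (I i)"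
    "\<And>c. I 0 c \<Longrightarrow> runs S c b0 Q"
  shows "I i c \<Longrightarrow> runs S c (i * b + b0) Q"
proof (induction i arbitrary: c)
  case 0 then show ?case using assms(2) by simp
next
  case (Suc i)
  have "runs S c (b + (i * b + b0)) Q"
    by (rule runs_seq[OF assms(1)[OF Suc.prems]]) (rule Suc.IH)
  then show ?case by (simp add: add.assoc)
qed

definition Sp :: "nat \<Rightarrow> int set" where
  "Sp n = {-(2 * int n + 200) .. int n + 1}"

locale ctx =
  fixes k :: nat and w :: "nat list"
  assumes wo: "word_over k w" and n1: "1 \<le> length w" and k2: "2 \<le> k"
begin

abbreviation "n \<equiv> length w"
definition "Rw j = int (Rc k (take j w))"
definition "Uw j = (if unbordered (take j w) then 1 else (0::int))"
definition "NI x = int (Nv k x)"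

definition base :: "(int \<Rightarrow> int) \<Rightarrow> bool" where
  "base m \<longleftrightarrow> m 0 = int n \<and> m 1 = int k \<and> m (-1) = 1 \<and> m (-2) = 2 \<and> m (-18) = -100 \<and>
     (\<forall>i<n. m (int i + 2) = int (w ! i))"

definition tab :: "(int \<Rightarrow> int) \<Rightarrow> nat \<Rightarrow> bool" where
  "tab m L \<longleftrightarrow> (\<forall>j. 1 \<le> j \<longrightarrow> j < L \<longrightarrow> m (-100 - 2 * int j) = Rw j \<and> m (-101 - 2 * int j) = Uw j)"


lemma NI_take_Suc: "word_over k x \<Longrightarrow> t < length x \<Longrightarrow>
   NI (take (Suc t) x) = NI (take t x) * int k + int (x ! t) - 1"
proof -
  assume a: "word_over k x" "t < length x"
  have "1 \<le> x ! t" using word_over_nth[OF a] by simp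
  then show ?thesis using a
    by (simp add: NI_def take_Suc_conv_app_nth Nv_snoc of_nat_diff)
qed

lemma NI_Nil[simp]: "NI [] = 0" by (simp add: NI_def)

definition termR :: "nat \<Rightarrow> nat \<Rightarrow> int" where
  "termR L j = Rw j * int k ^ (L - 2 * j) + Uw j * (NI (take (L - 2 * j) (drop j w)) +
      (if NI (take j w) < NI (take j (drop (L - j) w)) then 1 else 0))"

definition termU :: "nat \<Rightarrow> nat \<Rightarrow> int" where
  "termU L j = Uw j * (if NI (take j w) = NI (take j (drop (L - j) w)) then 1 else 0)"

definition "Ssum L j = (\<Sum>i\<in>{1..<j}. termR L i)"
definition "Usum L j = (\<Sum>i\<in>{1..<j}. termU L i)"

lemma Ssum_Suc: "1 \<le> j \<Longrightarrow> Ssum L (Suc j) = Ssum L j + termR L j"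
  by (simp add: Ssum_def)
lemma Usum_Suc: "1 \<le> j \<Longrightarrow> Usum L (Suc j) = Usum L j + termU L j"
  by (simp add: Usum_def)
lemma Ssum_1[simp]: "Ssum L 1 = 0" by (simp add: Ssum_def)
lemma Usum_1[simp]: "Usum L 1 = 0" by (simp add: Usum_def)

lemma math_link:
  assumes L: "1 \<le> L" "L \<le> n"
  shows "Rw L = NI (take L w) - Ssum L (L div 2 + 1)"
    and "Uw L = 1 - Usum L (L div 2 + 1)"
proof -
  let ?v = "take L w"
  have lv: "length ?v = L" using L by simp
  have wv: "word_over k ?v" using wo by (rule word_over_take)
  have iv: "{1..<L div 2 + 1} = {1..L div 2}" by auto
  have tm: "int (Tm k ?v j) = termR L j" if j: "j \<in> {1..L div 2}" for j
  proof -
    have j2: "2 * j \<le> L" "1 \<le> j" using j by auto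
    have e1: "take j ?v = take j w" using j2 by simp
    have e2: "take (L - 2 * j) (drop j ?v) = take (L - 2 * j) (drop j w)" using j2
      by (simp add: drop_take take_take min_def)
    have e3: "drop (L - j) ?v = take j (drop (L - j) w)" using j2 L
      by (simp add: drop_take)
    have lx: "lex_less (take j w) (take j (drop (L - j) w)) \<longleftrightarrow>
        Nv k (take j w) < Nv k (take j (drop (L - j) w))"
      using j2 L by (intro lex_Nv) (auto intro: word_over_take word_over_drop wo)
    show ?thesis unfolding Tm_def termR_def lv e1 e2 e3 lx
      by (simp add: Rw_def Uw_def NI_def)
  qed
  have tu: "(if unbordered (take j ?v) \<and> take j ?v = drop (length ?v - j) ?v then 1 else 0) = termU L j"
    if j: "j \<in> {1..L div 2}" for j
  proof -
    have j2: "2 * j \<le> L" "1 \<le> j" using j by auto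
    have e1: "take j ?v = take j w" using j2 by simp
    have e3: "drop (L - j) ?v = take j (drop (L - j) w)" using j2 L
      by (simp add: drop_take)
    have eq: "take j w = take j (drop (L - j) w) \<longleftrightarrow>
        Nv k (take j w) = Nv k (take j (drop (L - j) w))"
      using j2 L Nv_inj[of "take j w" "take j (drop (L - j) w)" k]
      by (auto intro: word_over_take word_over_drop wo)
    show ?thesis unfolding termU_def lv e1 e3 eq
      by (simp add: Uw_def NI_def)
  qed
  have "int (Nv k ?v) = int (Rc k ?v) + (\<Sum>j\<in>{1..L div 2}. int (Tm k ?v j))"
    using count_main[OF wv] lv by simp
  also have "(\<Sum>j\<in>{1..L div 2}. int (Tm k ?v j)) = Ssum L (L div 2 + 1)"
    unfolding Ssum_def iv using tm by (intro sum.cong) auto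
  finally show "Rw L = NI (take L w) - Ssum L (L div 2 + 1)"
    by (simp add: Rw_def NI_def)
  have "Usum L (L div 2 + 1) = (\<Sum>j\<in>{1..L div 2}. (if unbordered (take j ?v) \<and> take j ?v = drop (length ?v - j) ?v then 1 else 0))"
    unfolding Usum_def iv by (rule sum.cong[OF refl]) (rule tu[symmetric])
  also have "\<dots> = (if unbordered ?v then 0 else 1)" using count_unb[of ?v] lv by simp
  finally show "Uw L = 1 - Usum L (L div 2 + 1)" by (simp add: Uw_def)
qed

lemma base_upd[simp]: "r \<in> {-17..-3} \<Longrightarrow> base (m(r := v)) = base m"
  unfolding base_def by auto

lemma base_upd_arr[simp]: "a < -20 \<Longrightarrow> base (m(a := v)) = base m"
  unfolding base_def by auto

lemma tab_upd[simp]: "r \<in> {-30..-1} \<Longrightarrow> tab (m(r := v)) L = tab m L"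
  unfolding tab_def by auto

definition frameL :: "(int \<Rightarrow> int) \<Rightarrow> nat \<Rightarrow> bool" where
  "frameL m L \<longleftrightarrow> base m \<and> tab m L \<and> m (-3) = int L \<and> m (-11) = NI (take L w) \<and> 1 \<le> L \<and> L \<le> n"

definition frameJ :: "(int \<Rightarrow> int) \<Rightarrow> nat \<Rightarrow> nat \<Rightarrow> bool" where
  "frameJ m L j \<longleftrightarrow> frameL m L \<and> m (-4) = int j \<and> m (-9) = Ssum L j \<and> m (-10) = Usum L j \<and>
     m (-15) = Rw j \<and> m (-14) = Uw j \<and> 1 \<le> j \<and> 2 * j \<le> L"

lemma frameL_upd[simp]: "r \<in> {-4,-5,-6,-7,-8,-9,-10,-12,-13,-14,-15,-16,-17} \<Longrightarrow> frameL (m(r := v)) L = frameL m L"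
  unfolding frameL_def by auto

lemma frameJ_upd[simp]: "r \<in> {-5,-6,-7,-8,-12,-13,-16,-17} \<Longrightarrow> frameJ (m(r := v)) L j = frameJ m L j"
  unfolding frameJ_def by auto

lemma baseD: "base m \<Longrightarrow> m 0 = int n \<and> m 1 = int k \<and> m (-1) = 1 \<and> m (-2) = 2 \<and> m (-18) = -100"
  by (simp add: base_def)

lemma base_inp: "base m \<Longrightarrow> i < n \<Longrightarrow> a = int i + 2 \<Longrightarrow> m a = int (w ! i)"
  by (simp add: base_def)

lemma frameL_D: "frameL m L \<Longrightarrow> base m \<and> tab m L \<and> m (-3) = int L \<and> m (-11) = NI (take L w) \<and> 1 \<le> L \<and> L \<le> n"
  by (simp add: frameL_def)

lemma frameJ_D: "frameJ m L j \<Longrightarrow> frameL m L \<and> m (-4) = int j \<and> m (-9) = Ssum L j \<and> m (-10) = Usum L j \<and>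
     m (-15) = Rw j \<and> m (-14) = Uw j \<and> 1 \<le> j \<and> 2 * j \<le> L"
  by (simp add: frameJ_def)

definition ABinv :: "nat \<Rightarrow> nat \<Rightarrow> nat \<Rightarrow> config \<Rightarrow> bool" where
  "ABinv L j i c \<longleftrightarrow> i \<le> j \<and> fst c = 26 \<and> frameJ (snd c) L j \<and> snd c (-5) = int (j - i) \<and>
     snd c (-6) = NI (take (j - i) w) \<and> snd c (-7) = NI (take (j - i) (drop (L - j) w))"

lemma AB_step: assumes "ABinv L j (Suc i) c" shows "runs (Sp n) c 17 (ABinv L j i)"
proof -
  obtain m where c: "c = (26, m)" using assms by (cases c) (auto simp: ABinv_def)
  define t where "t = j - Suc i"
  have fr: "frameJ m L j" and iv: "Suc i \<le> j" "m (-5) = int t" "m (-6) = NI (take t w)"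
     "m (-7) = NI (take t (drop (L - j) w))"
    using assms by (auto simp: ABinv_def c t_def)
  have jt: "j - i = Suc t" using iv t_def by simp
  have fl: "frameL m L" and fj: "m (-4) = int j" "1 \<le> j" "2 * j \<le> L"
    using frameJ_D[OF fr] by auto
  have bs: "base m" and fL: "m (-3) = int L" "1 \<le> L" "L \<le> n" using frameL_D[OF fl] by auto
  have bd: "m 0 = int n" "m 1 = int k" "m (-1) = 1" "m (-2) = 2" "m (-18) = -100" using baseD[OF bs] by auto
  have tj: "t < j" using iv t_def by simp
  have x1: "m (int t + 2) = int (w ! t)" using base_inp[OF bs, of t] tj fj fL by simp
  have x2: "m (int L - int j + int t + 2) = int (w ! (L - j + t))"
    by (rule base_inp[OF bs]) (use tj fj fL in simp)+
  have n1: "NI (take (Suc t) w) = NI (take t w) * int k + int (w ! t) - 1"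
    using NI_take_Suc[OF wo, of t] tj fj fL by simp
  have n2: "NI (take (Suc t) (drop (L - j) w)) = NI (take t (drop (L - j) w)) * int k + int (w ! (L - j + t)) - 1"
    using NI_take_Suc[OF word_over_drop[OF wo], of t "L - j"] tj fj fL by simp
  show ?thesis unfolding c
    using fj fL bd iv tj x1 x2
    apply -
    apply (rule runs_step, simp, simp, simp add: Sp_def, simp)+
    apply (rule runs_done)
    using fr iv jt n1 n2 by (simp add: ABinv_def)
qed


definition ABpost :: "nat \<Rightarrow> nat \<Rightarrow> config \<Rightarrow> bool" where
  "ABpost L j c \<longleftrightarrow> fst c = 43 \<and> frameJ (snd c) L j \<and>
     snd c (-6) = NI (take j w) \<and> snd c (-7) = NI (take j (drop (L - j) w))"

lemma AB_exit: assumes "ABinv L j 0 c" shows "runs (Sp n) c 3 (ABpost L j)"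
proof -
  obtain m where c: "c = (26, m)" using assms by (cases c) (auto simp: ABinv_def)
  have fr: "frameJ m L j" and iv: "m (-5) = int j" "m (-6) = NI (take j w)"
     "m (-7) = NI (take j (drop (L - j) w))"
    using assms by (auto simp: ABinv_def c)
  have fl: "frameL m L" and fj: "m (-4) = int j" "1 \<le> j" "2 * j \<le> L"
    using frameJ_D[OF fr] by auto
  have bs: "base m" using frameL_D[OF fl] by auto
  have bd: "m (-1) = 1" using baseD[OF bs] by auto
  show ?thesis unfolding c
    using fj bd iv
    apply -
    apply (rule runs_step, simp, simp, simp add: Sp_def, simp)+
    apply (rule runs_done)
    using fr iv by (simp add: ABpost_def)
qed

lemma AB_loop: assumes "ABinv L j j c" shows "runs (Sp n) c (j * 17 + 3) (ABpost L j)"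
  by (rule runs_loop[of "ABinv L j"]) (use AB_step AB_exit assms in auto)

definition ACCinv :: "nat \<Rightarrow> nat \<Rightarrow> nat \<Rightarrow> config \<Rightarrow> bool" where
  "ACCinv L j i c \<longleftrightarrow> i \<le> L - 2 * j \<and> fst c = 47 \<and> frameJ (snd c) L j \<and>
     snd c (-6) = NI (take j w) \<and> snd c (-7) = NI (take j (drop (L - j) w)) \<and>
     snd c (-5) = int (L - j - i) \<and>
     snd c (-8) = Rw j * int k ^ (L - 2 * j - i) + Uw j * NI (take (L - 2 * j - i) (drop j w))"

definition ACCpost :: "nat \<Rightarrow> nat \<Rightarrow> config \<Rightarrow> bool" where
  "ACCpost L j c \<longleftrightarrow> fst c = 59 \<and> frameJ (snd c) L j \<and>
     snd c (-6) = NI (take j w) \<and> snd c (-7) = NI (take j (drop (L - j) w)) \<and>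
     snd c (-8) = Rw j * int k ^ (L - 2 * j) + Uw j * NI (take (L - 2 * j) (drop j w))"

lemma ACC_step: assumes "ACCinv L j (Suc i) c" shows "runs (Sp n) c 12 (ACCinv L j i)"
proof -
  obtain m where c: "c = (47, m)" using assms by (cases c) (auto simp: ACCinv_def)
  define e where "e = L - 2 * j - Suc i"
  have fr: "frameJ m L j" and iv: "Suc i \<le> L - 2 * j" "m (-5) = int (j + e)"
     "m (-8) = Rw j * int k ^ e + Uw j * NI (take e (drop j w))"
     "m (-6) = NI (take j w)" "m (-7) = NI (take j (drop (L - j) w))"
    using assms by (auto simp: ACCinv_def c e_def)
  have fl: "frameL m L" and fj: "m (-4) = int j" "1 \<le> j" "2 * j \<le> L" "m (-14) = Uw j"
    using frameJ_D[OF fr] by auto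
  have bs: "base m" and fL: "m (-3) = int L" "1 \<le> L" "L \<le> n" using frameL_D[OF fl] by auto
  have bd: "m 0 = int n" "m 1 = int k" "m (-1) = 1" "m (-2) = 2" "m (-18) = -100" using baseD[OF bs] by auto
  have et: "j + e < L - j" using iv e_def by simp
  have et2: "2 * int j + int e < int L" using et by linarith
  have x1: "m (int j + int e + 2) = int (w ! (j + e))"
    by (rule base_inp[OF bs]) (use et fj fL in simp)+
  have n1: "NI (take (Suc e) (drop j w)) = NI (take e (drop j w)) * int k + int (w ! (j + e)) - 1"
    using NI_take_Suc[OF word_over_drop[OF wo], of e j] et fj fL by simp
  have ie: "L - 2 * j - i = Suc e" "L - j - i = Suc (j + e)" using iv e_def by auto
  show ?thesis unfolding c
    using fj fL bd iv et x1 et2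
    apply -
    apply (rule runs_step, simp, simp, simp add: Sp_def, simp)+
    apply (rule runs_done)
    using fr iv ie by (simp add: ACCinv_def n1 algebra_simps)
qed

lemma ACC_exit: assumes "ACCinv L j 0 c" shows "runs (Sp n) c 4 (ACCpost L j)"
proof -
  obtain m where c: "c = (47, m)" using assms by (cases c) (auto simp: ACCinv_def)
  have fr: "frameJ m L j" and iv: "m (-5) = int (L - j)"
    using assms by (auto simp: ACCinv_def c)
  have fl: "frameL m L" and fj: "m (-4) = int j" "1 \<le> j" "2 * j \<le> L"
    using frameJ_D[OF fr] by auto
  have bs: "base m" and fL: "m (-3) = int L" using frameL_D[OF fl] by auto
  have bd: "m (-1) = 1" using baseD[OF bs] by auto
  show ?thesis unfolding c
    using fj bd iv fL
    apply -
    apply (rule runs_step, simp, simp, simp add: Sp_def, simp)+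
    apply (rule runs_done)
    using assms by (simp add: ACCpost_def ACCinv_def c)
qed

lemma ACC_loop: assumes "ACCinv L j (L - 2 * j) c" shows "runs (Sp n) c ((L - 2 * j) * 12 + 4) (ACCpost L j)"
  by (rule runs_loop[of "ACCinv L j"]) (use ACC_step ACC_exit assms in auto)

definition Jinv :: "nat \<Rightarrow> nat \<Rightarrow> config \<Rightarrow> bool" where
  "Jinv L j c \<longleftrightarrow> fst c = 15 \<and> frameL (snd c) L \<and> snd c (-4) = int j \<and>
     snd c (-9) = Ssum L j \<and> snd c (-10) = Usum L j \<and> 1 \<le> j \<and> j \<le> L div 2 + 1"

lemma J_head: assumes "Jinv L j c" "2 * j \<le> L" shows "runs (Sp n) c 11 (ABinv L j j)"
proof -
  obtain m where c: "c = (15, m)" using assms by (cases c) (auto simp: Jinv_def)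
  have fl: "frameL m L" and iv: "m (-4) = int j" "m (-9) = Ssum L j" "m (-10) = Usum L j" "1 \<le> j"
    using assms by (auto simp: Jinv_def c)
  have bs: "base m" and tb: "tab m L" and fL: "m (-3) = int L" "1 \<le> L" "L \<le> n" "m (-11) = NI (take L w)"
    using frameL_D[OF fl] by auto
  have bd: "m 0 = int n" "m 1 = int k" "m (-1) = 1" "m (-2) = 2" "m (-18) = -100" using baseD[OF bs] by auto
  have tj: "m (-100 - 2 * int j) = Rw j" "m (-101 - 2 * int j) = Uw j"
    using tb iv assms(2) unfolding tab_def by auto
  show ?thesis unfolding c
    using fL bd iv tj assms(2)
    apply -
    apply (rule runs_step, simp, simp, simp add: Sp_def, simp)+
    apply (rule runs_done)
    using fl iv assms(2) by (simp add: ABinv_def frameJ_def)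
qed

lemma mid: assumes "ABpost L j c" shows "runs (Sp n) c 4 (ACCinv L j (L - 2 * j))"
proof -
  obtain m where c: "c = (43, m)" using assms by (cases c) (auto simp: ABpost_def)
  have fr: "frameJ m L j" using assms by (auto simp: ABpost_def c)
  have fj: "m (-4) = int j" "1 \<le> j" "2 * j \<le> L" "m (-15) = Rw j"
    using frameJ_D[OF fr] by auto
  show ?thesis unfolding c
    using fj
    apply -
    apply (rule runs_step, simp, simp, simp add: Sp_def, simp)+
    apply (rule runs_done)
    using assms fj by (simp add: ACCinv_def ABpost_def c)
qed

lemma J_tail: assumes "ACCpost L j c" shows "runs (Sp n) c 8 (Jinv L (Suc j))"
proof -
  obtain m where c: "c = (59, m)" using assms by (cases c) (auto simp: ACCpost_def)
  have fr: "frameJ m L j" and iv: "m (-6) = NI (take j w)" "m (-7) = NI (take j (drop (L - j) w))"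
     "m (-8) = Rw j * int k ^ (L - 2 * j) + Uw j * NI (take (L - 2 * j) (drop j w))"
    using assms by (auto simp: ACCpost_def c)
  have fl: "frameL m L" and fj: "m (-4) = int j" "1 \<le> j" "2 * j \<le> L" "m (-14) = Uw j"
     "m (-9) = Ssum L j" "m (-10) = Usum L j"
    using frameJ_D[OF fr] by auto
  have bs: "base m" using frameL_D[OF fl] by auto
  have bd: "m (-1) = 1" using baseD[OF bs] by auto
  have jl: "Suc j \<le> L div 2 + 1" using fj by auto
  consider (lt) "NI (take j w) < NI (take j (drop (L - j) w))"
    | (eq) "NI (take j w) = NI (take j (drop (L - j) w))"
    | (gt) "NI (take j (drop (L - j) w)) < NI (take j w)" by fastforce
  then show ?thesis
  proof cases
    case lt
    show ?thesis unfolding c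
      using fj bd iv lt
      apply -
      apply (rule runs_step, simp, simp, simp add: Sp_def, simp)+
      apply (rule runs_done)
      using fl fj lt jl by (simp add: Jinv_def Ssum_Suc Usum_Suc termR_def termU_def algebra_simps)
  next
    case eq
    show ?thesis unfolding c
      using fj bd iv eq
      apply -
      apply (rule runs_step, simp, simp, simp add: Sp_def, simp)+
      apply (rule runs_done)
      using fl fj eq jl by (simp add: Jinv_def Ssum_Suc Usum_Suc termR_def termU_def)
  next
    case gt
    show ?thesis unfolding c
      using fj bd iv gt
      apply -
      apply (rule runs_step, simp, simp, simp add: Sp_def, simp)+
      apply (rule runs_done)
      using fl fj gt jl by (simp add: Jinv_def Ssum_Suc Usum_Suc termR_def termU_def)
  qed
qed

lemma J_iter: assumes "Jinv L j c" "2 * j \<le> L" shows "runs (Sp n) c (17 * n + 30) (Jinv L (Suc j))"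
proof -
  have fL: "L \<le> n" using assms(1) by (cases c) (auto simp: Jinv_def frameL_def)
  have "runs (Sp n) c (11 + ((j * 17 + 3) + (4 + (((L - 2 * j) * 12 + 4) + 8)))) (Jinv L (Suc j))"
    apply (rule runs_seq[OF J_head[OF assms]])
    apply (rule runs_seq[OF AB_loop], assumption)
    apply (rule runs_seq[OF mid], assumption)
    apply (rule runs_seq[OF ACC_loop], assumption)
    apply (rule J_tail, assumption)
    done
  moreover have "11 + ((j * 17 + 3) + (4 + (((L - 2 * j) * 12 + 4) + 8))) \<le> 17 * n + 30"
    using assms(2) fL by (simp add: diff_mult_distrib)
  ultimately show ?thesis by (rule runs_mono) auto
qed

lemma par1[simp]: "(-100 - 2 * int a = -101 - 2 * int b) = False" by presburger
lemma par2[simp]: "(-101 - 2 * int a = -100 - 2 * int b) = False" by presburger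

definition Oinv :: "nat \<Rightarrow> config \<Rightarrow> bool" where
  "Oinv L c \<longleftrightarrow> fst c = 5 \<and> base (snd c) \<and> tab (snd c) L \<and> snd c (-3) = int L \<and>
     snd c (-11) = NI (take (L - 1) w) \<and> 1 \<le> L \<and> L \<le> n + 1"

lemma J_exit: assumes "Jinv L (L div 2 + 1) c" shows "runs (Sp n) c 12 (Oinv (Suc L))"
proof -
  obtain m where c: "c = (15, m)" using assms by (cases c) (auto simp: Jinv_def)
  let ?j = "L div 2 + 1"
  have fl: "frameL m L" and iv: "m (-4) = int ?j" "m (-9) = Ssum L ?j" "m (-10) = Usum L ?j"
    using assms by (auto simp: Jinv_def c)
  have bs: "base m" and tb: "tab m L" and fL: "m (-3) = int L" "1 \<le> L" "L \<le> n" "m (-11) = NI (take L w)"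
    using frameL_D[OF fl] by auto
  have bd: "m 0 = int n" "m 1 = int k" "m (-1) = 1" "m (-2) = 2" "m (-18) = -100" using baseD[OF bs] by auto
  have ml: "Rw L = NI (take L w) - Ssum L ?j" "Uw L = 1 - Usum L ?j"
    using math_link fL by auto
  have lt: "L < 2 * (L div 2 + 1)" by simp
  show ?thesis unfolding c
    using fL bd iv lt
    apply -
    apply (rule runs_step, simp, simp, simp add: Sp_def, simp)+
    apply (rule runs_done)
    using bs tb fL ml unfolding Oinv_def tab_def
    by (auto simp: less_Suc_eq)
qed

lemma J_loop: assumes "Jinv L 1 c" shows "runs (Sp n) c ((L div 2) * (17 * n + 30) + 12) (Oinv (Suc L))"
  apply (rule runs_loop[of "\<lambda>i c. Jinv L (L div 2 + 1 - i) c \<and> i \<le> L div 2"])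
  subgoal for i c
  proof -
    assume h: "Jinv L (L div 2 + 1 - Suc i) c \<and> Suc i \<le> L div 2"
    have "i \<le> L div 2" using h by simp
    then have e: "L div 2 + 1 - i = Suc (L div 2 + 1 - Suc i)" by (simp add: Suc_diff_le)
    have "runs (Sp n) c (17 * n + 30) (Jinv L (Suc (L div 2 + 1 - Suc i)))"
      using h by (intro J_iter) auto
    then show "runs (Sp n) c (17 * n + 30) (\<lambda>c. Jinv L (L div 2 + 1 - i) c \<and> i \<le> L div 2)"
      unfolding e by (rule runs_mono) (use h in auto)
  qed
  subgoal using J_exit by auto
  using assms by auto


end


lemma prog_S1[simp]: "prog ! Suc 0 = Const (-2) 2" by (simp add: prog_def)
lemma prog_S2[simp]: "prog ! Suc (Suc 0) = Const (-18) (-100)" by (simp add: prog_def)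
lemma prog_S3[simp]: "prog ! Suc (Suc (Suc 0)) = Const (-3) 1" by (simp add: prog_def)
lemma prog_S4[simp]: "prog ! Suc (Suc (Suc (Suc 0))) = Const (-11) 0" by (simp add: prog_def)
context ctx
begin

lemma O_head: assumes "Oinv L c" "L \<le> n" shows "runs (Sp n) c 10 (Jinv L 1)"
proof -
  obtain m where c: "c = (5, m)" using assms by (cases c) (auto simp: Oinv_def)
  have bs: "base m" and tb: "tab m L" and iv: "m (-3) = int L" "m (-11) = NI (take (L - 1) w)" "1 \<le> L"
    using assms by (auto simp: Oinv_def c)
  have bd: "m 0 = int n" "m 1 = int k" "m (-1) = 1" "m (-2) = 2" "m (-18) = -100" using baseD[OF bs] by auto
  have x: "m (int L + 1) = int (w ! (L - 1))"
    by (rule base_inp[OF bs]) (use iv assms(2) in simp)+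
  have n1: "NI (take L w) = NI (take (L - 1) w) * int k + int (w ! (L - 1)) - 1"
    using NI_take_Suc[OF wo, of "L - 1"] iv assms(2) by simp
  have ln: "int L \<le> int n" using assms(2) by simp
  show ?thesis unfolding c
    using bd iv x ln
    apply -
    apply (rule runs_step, simp, simp, simp add: Sp_def, simp)+
    apply (rule runs_done)
    using bs tb iv assms(2) by (simp add: Jinv_def frameL_def n1 Ssum_def Usum_def)
qed

lemma O_iter: assumes "Oinv L c" "L \<le> n" shows "runs (Sp n) c (n * (17 * n + 30) + 22) (Oinv (Suc L))"
proof -
  have "runs (Sp n) c (10 + ((L div 2) * (17 * n + 30) + 12)) (Oinv (Suc L))"
    by (rule runs_seq[OF O_head[OF assms]]) (rule J_loop)
  moreover have "10 + ((L div 2) * (17 * n + 30) + 12) \<le> n * (17 * n + 30) + 22"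
  proof -
    have "L div 2 \<le> n" using assms(2) by simp
    then have "(L div 2) * (17 * n + 30) \<le> n * (17 * n + 30)" by (rule mult_right_mono) simp
    then show ?thesis by simp
  qed
  ultimately show ?thesis by (rule runs_mono) auto
qed

definition Fin :: "config \<Rightarrow> bool" where
  "Fin c \<longleftrightarrow> halted prog c \<and> snd c 0 = int (rankU k w)"

lemma rankU_Rc: "rankU k w = 1 + Rc k w"
proof -
  have "{u. length u = length w \<and> word_over k u \<and> unbordered u \<and> lex_less u w} =
        {u \<in> Unb k (length w). lex_less u w}"
    by (auto simp: Unb_def Wd_def)
  then show ?thesis by (simp add: rankU_def Rc_def)
qed

lemma O_exit: assumes "Oinv (Suc n) c" shows "runs (Sp n) c 6 Fin"
proof -
  obtain m where c: "c = (5, m)" using assms by (cases c) (auto simp: Oinv_def)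
  have bs: "base m" and tb: "tab m (Suc n)" and iv: "m (-3) = int (Suc n)"
    using assms by (auto simp: Oinv_def c)
  have bd: "m 0 = int n" "m 1 = int k" "m (-1) = 1" "m (-2) = 2" "m (-18) = -100" using baseD[OF bs] by auto
  have tn: "m (-100 - 2 * int n) = Rw n" using tb n1 unfolding tab_def by auto
  have rr: "Rw n + 1 = int (rankU k w)" by (simp add: Rw_def rankU_Rc)
  show ?thesis unfolding c
    using bd iv tn
    apply -
    apply (rule runs_step, simp, simp, simp add: Sp_def, simp)+
    apply (rule runs_done)
    using rr by (simp add: Fin_def halted_def)
qed

lemma init_run: "runs (Sp n) (init_config k w) 5 (Oinv 1)"
proof -
  obtain m0 where c: "init_config k w = (0, m0)" by (simp add: init_config_def)
  have f: "m0 0 = int n" "m0 1 = int k" "\<forall>i<n. m0 (int i + 2) = int (w ! i)"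
    using c by (auto simp: init_config_def)
  show ?thesis unfolding c
    apply (rule runs_step, simp, simp, simp add: Sp_def, simp)+
    apply (rule runs_done)
    using f by (simp add: Oinv_def base_def tab_def)
qed

lemma main_run: "runs (Sp n) (init_config k w) (5 + (n * (n * (17 * n + 30) + 22) + 6)) Fin"
proof (rule runs_seq[OF init_run])
  fix c assume c: "Oinv 1 c"
  show "runs (Sp n) c (n * (n * (17 * n + 30) + 22) + 6) Fin"
  proof (rule runs_loop[of "\<lambda>i c. Oinv (n + 1 - i) c \<and> i \<le> n"])
    fix i c assume h: "Oinv (n + 1 - Suc i) c \<and> Suc i \<le> n"
    have "i \<le> n" using h by simp
    then have e: "n + 1 - i = Suc (n + 1 - Suc i)" by (simp add: Suc_diff_le)
    have "runs (Sp n) c (n * (17 * n + 30) + 22) (Oinv (Suc (n + 1 - Suc i)))"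
      using h by (intro O_iter) auto
    then show "runs (Sp n) c (n * (17 * n + 30) + 22) (\<lambda>c. Oinv (n + 1 - i) c \<and> i \<le> n)"
      unfolding e by (rule runs_mono) (use h in auto)
  next
    fix c assume "Oinv (n + 1 - 0) c \<and> 0 \<le> n"
    then show "runs (Sp n) c 6 Fin" using O_exit by simp
  next
    show "Oinv (n + 1 - n) c \<and> n \<le> n" using c by simp
  qed
qed

end

lemma card_Sp: "card (Sp n) = 3 * n + 202"
  by (simp add: Sp_def)

lemma time_bound: assumes "1 \<le> n" "2 \<le> k"
  shows "5 + (n * (n * (17 * n + 30) + 22) + 6) \<le> 300 * k * (n::nat) ^ 3"
proof -
  have a: "n \<le> n ^ 3" using assms power_increasing[of 1 3 n] by simp
  have b: "n ^ 2 \<le> n ^ 3" using assms by (intro power_increasing) auto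
  have c: "1 \<le> n ^ 3" using assms by simp
  have "5 + (n * (n * (17 * n + 30) + 22) + 6) = 17 * n ^ 3 + 30 * n ^ 2 + 22 * n + 11"
    by (simp add: power2_eq_square power3_eq_cube algebra_simps)
  also have "\<dots> \<le> 80 * n ^ 3" using a b c by linarith
  also have "\<dots> \<le> 300 * k * n ^ 3" using assms by simp
  finally show ?thesis .
qed

theorem theorem10:
  shows "\<exists>(P :: instr list) (C :: nat). \<forall>n k w.
           n \<ge> 1 \<longrightarrow> k \<ge> 2 \<longrightarrow> length w = n \<longrightarrow> word_over k w \<longrightarrow>
           (\<exists>t. t \<le> C * k * n ^ 3 \<and>
                halted P (steps P t (init_config k w)) \<and>
                snd (steps P t (init_config k w)) 0 = int (rankU k w) \<and>
                card (cells_used P t (init_config k w)) \<le> C * n)"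
proof -
  have "\<forall>n k w.
           n \<ge> 1 \<longrightarrow> k \<ge> 2 \<longrightarrow> length w = n \<longrightarrow> word_over k w \<longrightarrow>
           (\<exists>t. t \<le> 300 * k * n ^ 3 \<and>
                halted prog (steps prog t (init_config k w)) \<and>
                snd (steps prog t (init_config k w)) 0 = int (rankU k w) \<and>
                card (cells_used prog t (init_config k w)) \<le> 300 * n)"
  proof (intro allI impI)
    fix n k :: nat and w :: "nat list"
    assume n: "n \<ge> 1" and k: "k \<ge> 2" and l: "length w = n" and wo: "word_over k w"
    interpret ctx k w using n k l wo by unfold_locales auto
    obtain t where t: "t \<le> 5 + (n * (n * (17 * n + 30) + 22) + 6)"
      "ctx.Fin k w (steps prog t (init_config k w))" "cells_used prog t (init_config k w) \<subseteq> Sp n"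
      using main_run l unfolding runs_def by blast
    have "card (cells_used prog t (init_config k w)) \<le> card (Sp n)"
      using t(3) by (rule card_mono[rotated]) (simp add: Sp_def)
    also have "\<dots> \<le> 300 * n" using n by (simp add: card_Sp)
    finally have cd: "card (cells_used prog t (init_config k w)) \<le> 300 * n" .
    have tb: "t \<le> 300 * k * n ^ 3" using t(1) time_bound[OF n k] by linarith
    show "\<exists>t. t \<le> 300 * k * n ^ 3 \<and>
                halted prog (steps prog t (init_config k w)) \<and>
                snd (steps prog t (init_config k w)) 0 = int (rankU k w) \<and>
                card (cells_used prog t (init_config k w)) \<le> 300 * n"
      using t(2) tb cd unfolding Fin_def by blast
  qed
  then show ?thesis by blast
qed


end
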